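(* Let $\mathcal V$ be a finite vocabulary, $C\ge 2$, $\gamma\in\mathbb R$, and let $s,v:\mathcal V\to\mathbb R$ be unknown maps satisfying $\sum_{\tau\in\mathcal V}s(\tau)=\gamma$. Let $G(\mathbf t)=F^{\mathrm{SLALOM}}_{s,v}(\mathbf t)$ for all sequences $\mathbf t$ over $\mathcal V$ with $1\le|\mathbf t|\le C$, and assume $G$ is non-constant on this set of sequences. Then, given $\gamma$ and query access to $G$, the maps $s$ and $v$ can be recovered exactly using $2|\mathcal V|-1$ queries of $G$, all on sequences of length at most $2$ (the queried sequences may be chosen adaptively based on previous answers). In particular, $s$ and $v$ are uniquely determined by $G$ together with $\gamma$.
   Context: SLALOM (Softmax-Linked Additive Log Odds Model): given a token importance map $s:\mathcal V\to\mathbb R$ and a token value map $v:\mathcal V\to\mathbb R$, for a sequence $\mathbf t$ define $\alpha_i(\mathbf t)=\exp(s(t_i))/\sum_{j=1}^{|\mathbf t|}\exp(s(t_j))$ and $F^{\mathrm{SLALOM}}_{s,v}(\mathbf t)=\sum_{i=1}^{|\mathbf t|}\alpha_i(\mathbf t)\,v(t_i)$ (sums over positions, counting repeated tokens with multiplicity). The normalization constraint is $\sum_{\tau\in\mathcal V}s(\tau)=\gamma$ for a fixed user-chosen $\gamma\in\mathbb R$. *)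

theory Defs
  imports Complex_Main
begin

definition slalom_alpha :: "('a \<Rightarrow> real) \<Rightarrow> 'a list \<Rightarrow> nat \<Rightarrow> real" where
  "slalom_alpha s t i = exp (s (t ! i)) / (\<Sum>j<length t. exp (s (t ! j)))"

definition slalom :: "('a \<Rightarrow> real) \<Rightarrow> ('a \<Rightarrow> real) \<Rightarrow> 'a list \<Rightarrow> real" where
  "slalom s v t = (\<Sum>i<length t. slalom_alpha s t i * v (t ! i))"

text \<open>Adaptive query strategies: a decision tree that either outputs a result, or
  queries the oracle on a sequence and continues depending on the answer.\<close>

datatype ('a, 'b) qtree = Leaf 'b | Query "'a list" "real \<Rightarrow> ('a, 'b) qtree"

primrec run :: "('a list \<Rightarrow> real) \<Rightarrow> ('a, 'b) qtree \<Rightarrow> 'b" where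
  "run G (Leaf b) = b"
| "run G (Query t k) = run G (k (G t))"

primrec queries :: "('a list \<Rightarrow> real) \<Rightarrow> ('a, 'b) qtree \<Rightarrow> 'a list list" where
  "queries G (Leaf b) = []"
| "queries G (Query t k) = t # queries G (k (G t))"

end

theory Submission
  imports Defs
begin

fun qlist :: "'a list list \<Rightarrow> (real list \<Rightarrow> ('a,'b) qtree) \<Rightarrow> ('a,'b) qtree" where
  "qlist [] k = k []"
| "qlist (t#ts) k = Query t (\<lambda>x. qlist ts (\<lambda>xs. k (x#xs)))"

lemma qlist_run: "run G (qlist ts k) = run G (k (map G ts))"
  by (induction ts arbitrary: k) auto

lemma qlist_queries: "queries G (qlist ts k) = ts @ queries G (k (map G ts))"
  by (induction ts arbitrary: k) auto

definition qfun :: "'a list list \<Rightarrow> (('a list \<Rightarrow> real) \<Rightarrow> ('a,'b) qtree) \<Rightarrow> ('a,'b) qtree" where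
  "qfun ts k = qlist ts (\<lambda>xs. k (\<lambda>t. case map_of (zip ts xs) t of Some x \<Rightarrow> x | None \<Rightarrow> 0))"

lemma qfun_fun: "(\<lambda>t. case map_of (zip ts (map G ts)) t of Some x \<Rightarrow> x | None \<Rightarrow> 0)
   = (\<lambda>t. if t \<in> set ts then G t else 0)"
  by (auto simp: map_of_zip_map)

lemma qfun_run: "run G (qfun ts k) = run G (k (\<lambda>t. if t \<in> set ts then G t else 0))"
  unfolding qfun_def qlist_run qfun_fun ..

lemma qfun_queries: "queries G (qfun ts k) = ts @ queries G (k (\<lambda>t. if t \<in> set ts then G t else 0))"
  unfolding qfun_def qlist_queries qfun_fun ..

definition dif :: "('a \<Rightarrow> real) \<Rightarrow> real \<Rightarrow> 'a \<Rightarrow> 'a \<Rightarrow> real" where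
  "dif v g x y = (let p = (g - v y) / (v x - v y) in ln (p / (1 - p)))"

lemma slalom2: "slalom s v [x,y] = (exp (s x) * v x + exp (s y) * v y) / (exp (s x) + exp (s y))"
  by (simp add: slalom_def slalom_alpha_def lessThan_Suc numeral_2_eq_2 add_divide_distrib add.commute)

lemma dif_correct:
  assumes "v x \<noteq> v y"
  shows "dif v (slalom s v [x,y]) x y = s x - s y"
proof -
  define E where "E = exp (s x) + exp (s y)"
  have E: "E > 0" unfolding E_def by (simp add: add_pos_pos)
  have p: "(slalom s v [x,y] - v y) / (v x - v y) = exp (s x) / E"
  proof -
    have "slalom s v [x,y] - v y = exp (s x) * (v x - v y) / E"
      using E unfolding slalom2 E_def[symmetric] by (simp add: field_simps E_def)
    thus ?thesis using assms by simp
  qed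
  have q: "1 - exp (s x) / E = exp (s y) / E" using E by (simp add: field_simps E_def)
  have "exp (s x) / E / (exp (s y) / E) = exp (s x - s y)"
    using E by (simp add: exp_diff)
  thus ?thesis unfolding dif_def Let_def p q by simp
qed

definition partner :: "('a \<Rightarrow> real) \<Rightarrow> 'a \<Rightarrow> 'a \<Rightarrow> 'a \<Rightarrow> 'a" where
  "partner v a b c = (if v c \<noteq> v a then a else b)"

definition Dfun :: "('a \<Rightarrow> real) \<Rightarrow> 'a \<Rightarrow> 'a \<Rightarrow> ('a list \<Rightarrow> real) \<Rightarrow> 'a \<Rightarrow> real" where
  "Dfun v a b g c = (if c = a then 0 else if c = b then - dif v (g [a,b]) a b
     else if v c \<noteq> v a then dif v (g [c,a]) c a
     else dif v (g [c,b]) c b - dif v (g [a,b]) a b)"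

lemma Dfun_correct:
  assumes "v a \<noteq> v b" "g [a,b] = slalom s v [a,b]"
    "\<And>c. c \<noteq> a \<Longrightarrow> c \<noteq> b \<Longrightarrow> g [c, partner v a b c] = slalom s v [c, partner v a b c]"
  shows "Dfun v a b g c = s c - s a"
proof -
  have ab: "dif v (g [a,b]) a b = s a - s b" using assms(1,2) dif_correct by metis
  show ?thesis
  proof (cases "c = a \<or> c = b")
    case True thus ?thesis using ab by (auto simp: Dfun_def)
  next
    case False
    hence g: "g [c, partner v a b c] = slalom s v [c, partner v a b c]" using assms(3) by auto
    show ?thesis
    proof (cases "v c \<noteq> v a")
      case True
      thus ?thesis using False g dif_correct[of v c a s, OF True] by (simp add: Dfun_def partner_def)
    next
      case F: False
      hence vcb: "v c \<noteq> v b" using assms(1) by simp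
      thus ?thesis using False F g dif_correct[of v c b s, OF vcb] ab by (simp add: Dfun_def partner_def)
    qed
  qed
qed

definition recon :: "real \<Rightarrow> ('a::finite \<Rightarrow> real) \<Rightarrow> 'a \<Rightarrow> 'a \<Rightarrow> ('a list \<Rightarrow> real) \<Rightarrow> 'a \<Rightarrow> real" where
  "recon \<gamma> v a b g c = (\<gamma> - (\<Sum>d\<in>UNIV. Dfun v a b g d)) / card (UNIV::'a set) + Dfun v a b g c"

lemma recon_correct:
  fixes s :: "'a::finite \<Rightarrow> real"
  assumes "v a \<noteq> v b" "g [a,b] = slalom s v [a,b]"
    "\<And>c. c \<noteq> a \<Longrightarrow> c \<noteq> b \<Longrightarrow> g [c, partner v a b c] = slalom s v [c, partner v a b c]"
    "(\<Sum>\<tau>\<in>UNIV. s \<tau>) = \<gamma>"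
  shows "recon \<gamma> v a b g = s"
proof
  fix c
  have D: "\<And>d. Dfun v a b g d = s d - s a" using Dfun_correct[OF assms(1-3)] by blast
  have n: "real (card (UNIV::'a set)) > 0" by (simp add: finite_UNIV_card_ge_0)
  have "(\<Sum>d\<in>UNIV. Dfun v a b g d) = \<gamma> - card (UNIV::'a set) * s a"
    unfolding D using assms(4) by (simp add: sum_subtractf)
  hence "(\<gamma> - (\<Sum>d\<in>UNIV. Dfun v a b g d)) / card (UNIV::'a set) = s a" using n by simp
  thus "recon \<gamma> v a b g c = s c" unfolding recon_def D by simp
qed

lemma slalom_const:
  assumes "\<And>x. v x = k" "length t \<ge> 1"
  shows "slalom s v t = k"
proof -
  have pos: "(\<Sum>j<length t. exp (s (t ! j))) > 0"
    using assms(2) by (intro sum_pos) (auto simp: lessThan_empty_iff)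
  have "slalom s v t = (\<Sum>i<length t. k * exp (s (t ! i))) / (\<Sum>j<length t. exp (s (t ! j)))"
    unfolding slalom_def slalom_alpha_def assms(1)
    by (simp add: sum_divide_distrib mult.commute)
  also have "\<dots> = k * (\<Sum>j<length t. exp (s (t ! j))) / (\<Sum>j<length t. exp (s (t ! j)))"
    by (simp add: sum_distrib_left)
  finally show ?thesis using pos by simp
qed

definition pickab :: "('a \<Rightarrow> real) \<Rightarrow> 'a \<times> 'a" where
  "pickab v = (SOME p. v (fst p) \<noteq> v (snd p))"

definition ulist :: "'a::finite list" where
  "ulist = (SOME xs. distinct xs \<and> set xs = UNIV)"

lemma ulist: "distinct (ulist::'a::finite list) \<and> set (ulist::'a list) = UNIV"
  unfolding ulist_def by (rule someI_ex) (metis finite_distinct_list finite_UNIV)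

definition thetree :: "real \<Rightarrow> ('a::finite, ('a \<Rightarrow> real) \<times> ('a \<Rightarrow> real)) qtree" where
  "thetree \<gamma> = qfun (map (\<lambda>a. [a]) ulist) (\<lambda>g1.
     let v = (\<lambda>a. g1 [a]); a = fst (pickab v); b = snd (pickab v) in
     qfun ([a,b] # map (\<lambda>c. [c, partner v a b c]) (filter (\<lambda>c. c \<noteq> a \<and> c \<noteq> b) ulist))
       (\<lambda>g2. Leaf (recon \<gamma> v a b g2, v)))"

theorem proposition5p2:
  fixes \<gamma> :: real and C :: nat
  assumes "C \<ge> 2"
  shows "\<exists>T :: ('a::finite, ('a \<Rightarrow> real) \<times> ('a \<Rightarrow> real)) qtree.
    \<forall>s v :: 'a \<Rightarrow> real.
      (\<Sum>\<tau>\<in>UNIV. s \<tau>) = \<gamma> \<longrightarrow>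
      (\<exists>t1 t2. 1 \<le> length t1 \<and> length t1 \<le> C \<and> 1 \<le> length t2 \<and> length t2 \<le> C
               \<and> slalom s v t1 \<noteq> slalom s v t2) \<longrightarrow>
      run (slalom s v) T = (s, v)
      \<and> length (queries (slalom s v) T) \<le> 2 * card (UNIV :: 'a set) - 1
      \<and> (\<forall>t\<in>set (queries (slalom s v) T). 1 \<le> length t \<and> length t \<le> 2)"
proof (intro exI[of _ "thetree \<gamma>"] allI impI)
  fix s v :: "'a \<Rightarrow> real"
  assume sum: "(\<Sum>\<tau>\<in>UNIV. s \<tau>) = \<gamma>"
  assume "\<exists>t1 t2. 1 \<le> length t1 \<and> length t1 \<le> C \<and> 1 \<le> length t2 \<and> length t2 \<le> C
               \<and> slalom s v t1 \<noteq> slalom s v t2"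
  then obtain t1 t2 where t: "1 \<le> length t1" "1 \<le> length t2" "slalom s v t1 \<noteq> slalom s v t2"
    by blast
  have "\<exists>p. v (fst p) \<noteq> v (snd p)"
  proof (rule ccontr)
    assume "\<not> ?thesis"
    hence "\<And>x. v x = v (SOME z. True)" by (metis fst_conv snd_conv)
    thus False using t slalom_const by metis
  qed
  hence nab: "v (fst (pickab v)) \<noteq> v (snd (pickab v))" unfolding pickab_def by (rule someI_ex)
  define G where "G = slalom s v"
  define L where "L = (map (\<lambda>a. [a]) (ulist :: 'a list))"
  have g1: "(\<lambda>a. (\<lambda>t. if t \<in> set L then G t else 0) [a]) = v"
    by (auto simp: L_def G_def ulist slalom_def slalom_alpha_def)
  define a where "a = fst (pickab v)"
  define b where "b = snd (pickab v)"
  have vab: "v a \<noteq> v b" using nab a_def b_def by simp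
  hence anb: "a \<noteq> b" by auto
  define P where "P = [a,b] # map (\<lambda>c. [c, partner v a b c]) (filter (\<lambda>c. c \<noteq> a \<and> c \<noteq> b) (ulist :: 'a list))"
  define g2 where "g2 = (\<lambda>t. if t \<in> set P then G t else 0)"
  have T: "thetree \<gamma> = qfun L (\<lambda>g1. let v = (\<lambda>a. g1 [a]); a = fst (pickab v); b = snd (pickab v) in
     qfun ([a,b] # map (\<lambda>c. [c, partner v a b c]) (filter (\<lambda>c. c \<noteq> a \<and> c \<noteq> b) ulist))
       (\<lambda>g2. Leaf (recon \<gamma> v a b g2, v)))"
    unfolding thetree_def L_def ..
  have run: "run G (thetree \<gamma>) = (recon \<gamma> v a b g2, v)"
    unfolding T qfun_run g1 Let_def a_def[symmetric] b_def[symmetric] P_def[symmetric] g2_def by simp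
  have qs: "queries G (thetree \<gamma>) = L @ P"
    unfolding T qfun_queries g1 Let_def a_def[symmetric] b_def[symmetric] P_def[symmetric] by (simp add: qfun_queries)
  have rec: "recon \<gamma> v a b g2 = s"
  proof (rule recon_correct[OF vab _ _ sum])
    show "g2 [a,b] = slalom s v [a,b]" by (simp add: g2_def P_def G_def)
    fix c assume "c \<noteq> a" "c \<noteq> b"
    thus "g2 [c, partner v a b c] = slalom s v [c, partner v a b c]"
      by (simp add: g2_def P_def G_def ulist)
  qed
  have lenL: "length L = card (UNIV::'a set)"
    by (simp add: L_def ulist distinct_card[symmetric])
  have lf: "length (filter (\<lambda>c. c \<noteq> a \<and> c \<noteq> b) (ulist :: 'a list)) = card (UNIV::'a set) - 2"
  proof -
    have "length (filter (\<lambda>c. c \<noteq> a \<and> c \<noteq> b) (ulist :: 'a list)) = card (UNIV - {a,b})"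
    proof -
      have e: "{c. c \<noteq> a \<and> c \<noteq> b} \<inter> set (ulist :: 'a list) = UNIV - {a,b}"
        using ulist by auto
      show ?thesis by (simp only: distinct_length_filter[OF conjunct1[OF ulist]] e)
    qed
    thus ?thesis using anb by (simp add: card_Diff_subset)
  qed
  have cge: "card (UNIV::'a set) \<ge> 2"
  proof -
    have "card {a,b} \<le> card (UNIV::'a set)" by (rule card_mono) auto
    thus ?thesis using anb by simp
  qed
  have lenq: "length (L @ P) \<le> 2 * card (UNIV :: 'a set) - 1"
    using lenL lf cge by (simp add: P_def)
  have setq: "\<forall>t\<in>set (L @ P). 1 \<le> length t \<and> length t \<le> 2"
    by (auto simp: L_def P_def)
  show "run (slalom s v) (thetree \<gamma>) = (s, v)
      \<and> length (queries (slalom s v) (thetree \<gamma>)) \<le> 2 * card (UNIV :: 'a set) - 1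
      \<and> (\<forall>t\<in>set (queries (slalom s v) (thetree \<gamma>)). 1 \<le> length t \<and> length t \<le> 2)"
    using run rec qs lenq setq unfolding G_def by simp
qed

end
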